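(* Let $L$ be a finite distributive lattice, $c(L)$ its set of complemented elements, and for $x\in c(L)$ with complement $x'$ let $L(x):=\{(y,z)\in\widetilde L: y\le x,\ z\le x'\}$. Then $$\widetilde L=\bigcup_{x\in c(L)}L(x)$$ if and only if every connected component of the Hasse diagram of the poset $\mathcal J(L)$ has a unique minimal element (i.e. has a least element).
   Context: $L$ has least element $\bot$ and greatest element $\top$; $x\in L$ is complemented if there is $x'$ with $x\wedge x'=\bot$, $x\vee x'=\top$ (the complement is unique since $L$ is distributive). $\widetilde L:=\{(x,y)\in L^2: x\wedge y=\bot\}$ with the product order. $\mathcal J(L)$ is the set of join-irreducible elements of $L$ (elements covering exactly one element), with the order induced from $L$. *)

theory Defs
  imports Main
begin

text \<open>Throughout, the finite distributive lattice L is the type 'a of class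
  {finite, distrib_lattice, bounded_lattice} (least element bot, greatest top).\<close>

definition complemented :: "'a::bounded_lattice \<Rightarrow> bool" where
  "complemented x \<longleftrightarrow> (\<exists>x'. inf x x' = bot \<and> sup x x' = top)"

definition complement_of :: "'a::bounded_lattice \<Rightarrow> 'a" where
  "complement_of x = (THE x'. inf x x' = bot \<and> sup x x' = top)"

definition cL :: "'a::bounded_lattice set" where
  "cL = {x. complemented x}"

definition Ltilde :: "('a::bounded_lattice \<times> 'a) set" where
  "Ltilde = {(y, z). inf y z = bot}"

definition Lx :: "'a::bounded_lattice \<Rightarrow> ('a \<times> 'a) set" where
  "Lx x = {(y, z). (y, z) \<in> Ltilde \<and> y \<le> x \<and> z \<le> complement_of x}"

definition covers :: "'a::order \<Rightarrow> 'a \<Rightarrow> bool" where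
  "covers x y \<longleftrightarrow> y < x \<and> \<not> (\<exists>z. y < z \<and> z < x)"

text \<open>Join-irreducible elements: elements covering exactly one element.\<close>
definition JL :: "'a::order set" where
  "JL = {x. \<exists>!y. covers x y}"

definition hasseJ :: "('a::order \<times> 'a) set" where
  "hasseJ = {(a, b). a \<in> JL \<and> b \<in> JL \<and> b < a \<and> \<not> (\<exists>c\<in>JL. b < c \<and> c < a)}"

definition componentJ :: "'a::order \<Rightarrow> 'a set" where
  "componentJ a = {b \<in> JL. (a, b) \<in> (hasseJ \<union> hasseJ\<inverse>)\<^sup>*}"

end

theory Submission
  imports Defs
begin

context
  fixes dummy :: "'a::{finite, distrib_lattice, bounded_lattice} itself"
begin

definition jn :: "'a set \<Rightarrow> 'a" where
  "jn A = Sup_fin (insert bot A)"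

lemma jn_ub: "a \<in> A \<Longrightarrow> a \<le> jn A"
  unfolding jn_def by (rule Sup_fin.coboundedI) auto

lemma jn_lub: "(\<And>a. a \<in> A \<Longrightarrow> a \<le> u) \<Longrightarrow> jn A \<le> (u::'a)"
  unfolding jn_def by (rule Sup_fin.boundedI) auto

lemma JL_nbot: "(a::'a) \<in> JL \<Longrightarrow> a \<noteq> bot"
  unfolding JL_def covers_def by auto

lemma below_cover:
  assumes "(w::'a) < a" shows "\<exists>v. w \<le> v \<and> covers a v"
proof -
  have "finite {v. w \<le> v \<and> v < a}" by simp
  from finite_has_maximal2[OF this, of w] assms
  obtain v where v: "w \<le> v" "v < a" "\<forall>b. w \<le> b \<and> b < a \<longrightarrow> v \<le> b \<longrightarrow> v = b" by auto
  have "covers a v" unfolding covers_def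
  proof (intro conjI notI)
    show "v < a" by fact
  next
    assume "\<exists>z. v < z \<and> z < a"
    then obtain z where "v < z" "z < a" by blast
    have "w \<le> z" using v(1) \<open>v < z\<close> by simp
    hence "v = z" using v(3) \<open>z < a\<close> \<open>v < z\<close> by simp
    with \<open>v < z\<close> show False by simp
  qed
  with v show ?thesis by blast
qed

lemma JL_prime:
  assumes a: "(a::'a) \<in> JL" and le: "a \<le> sup b c"
  shows "a \<le> b \<or> a \<le> c"
proof (rule ccontr)
  assume n: "\<not> (a \<le> b \<or> a \<le> c)"
  from a obtain y where y: "covers a y" and uy: "\<And>y'. covers a y' \<Longrightarrow> y' = y"
    unfolding JL_def by blast
  have below: "w \<le> y" if "w < a" for w
    using below_cover[OF that] uy by blast
  have "inf a b < a" using n inf.cobounded1[of a b] le_iff_inf[of a b] by (auto simp: less_le)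
  hence 1: "inf a b \<le> y" by (rule below)
  have "inf a c < a" using n inf.cobounded1[of a c] le_iff_inf[of a c] by (auto simp: less_le)
  hence 2: "inf a c \<le> y" by (rule below)
  have "a = inf a (sup b c)" using le by (simp add: inf.absorb1)
  also have "\<dots> = sup (inf a b) (inf a c)" by (rule inf_sup_distrib1)
  also have "\<dots> \<le> y" using 1 2 by simp
  finally have "a \<le> y" .
  moreover have "y < a" using y unfolding covers_def by simp
  ultimately show False by simp
qed

lemma JL_prime_jn:
  assumes a: "(a::'a) \<in> JL" and le: "a \<le> jn A"
  shows "\<exists>b\<in>A. a \<le> b"
proof -
  have fin: "finite A" by simp
  have "a \<le> Sup_fin (insert bot A) \<Longrightarrow> \<exists>b\<in>A. a \<le> b"
    using fin
  proof (induction A rule: finite_induct)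
    case empty then show ?case using JL_nbot[OF a] by (simp add: bot_unique)
  next
    case (insert x F)
    have "insert bot (insert x F) = insert x (insert bot F)" by auto
    hence "a \<le> sup x (Sup_fin (insert bot F))" using insert.prems insert.hyps(1)
      by (simp add: Sup_fin.insert)
    then have "a \<le> x \<or> a \<le> Sup_fin (insert bot F)" using JL_prime[OF a] by blast
    then show ?case using insert.IH by blast
  qed
  then show ?thesis using le unfolding jn_def .
qed

lemma JL_below:
  assumes h: "\<And>a. a \<in> JL \<Longrightarrow> a \<le> x \<Longrightarrow> a \<le> u"
  shows "(x::'a) \<le> u"
proof (rule ccontr)
  assume nx: "\<not> x \<le> u"
  have "finite {w. w \<le> x \<and> \<not> w \<le> u}" by simp
  from finite_has_minimal2[OF this, of x] nx
  obtain w where w: "w \<le> x" "\<not> w \<le> u"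
    and wm: "\<And>b. b \<le> x \<Longrightarrow> \<not> b \<le> u \<Longrightarrow> b \<le> w \<Longrightarrow> w = b" by auto
  have "w \<noteq> bot" using w(2) by auto
  hence wb: "bot < w" by (simp add: bot_less)
  have small: "v \<le> u" if "v < w" for v
    using that wm[of v] w(1) by force
  obtain v where v: "covers w v" using below_cover[OF wb] by blast
  have "\<exists>!v. covers w v"
  proof (rule ex1I[of _ v])
    show "covers w v" by fact
  next
    fix v2 assume v2: "covers w v2"
    show "v2 = v"
    proof (rule ccontr)
      assume ne: "v2 \<noteq> v"
      have a1: "v < w" "v2 < w" using v v2 unfolding covers_def by auto
      have "sup v v2 = w"
      proof (rule ccontr)
        assume "sup v v2 \<noteq> w"
        hence lt: "sup v v2 < w" using a1 by (simp add: less_le)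
        have "sup v v2 = v"
        proof (rule ccontr)
          assume "sup v v2 \<noteq> v"
          hence "v < sup v v2" by (simp add: less_le)
          with lt v show False unfolding covers_def by blast
        qed
        hence "v2 \<le> v" by (simp add: sup.absorb_iff1)
        hence "v2 < v" using ne by simp
        with v2 a1 show False unfolding covers_def by blast
      qed
      moreover have "sup v v2 \<le> u" using small a1 by simp
      ultimately show False using w(2) by simp
    qed
  qed
  hence "w \<in> JL" unfolding JL_def by simp
  with h w show False by blast
qed

abbreviation RR :: "('a \<times> 'a) set" where "RR \<equiv> hasseJ \<union> hasseJ\<inverse>"

lemma RR_sym: "(a, b) \<in> RR\<^sup>* \<Longrightarrow> (b, a) \<in> RR\<^sup>*"
proof -
  have "sym RR" unfolding sym_def by auto
  hence "sym (RR\<^sup>*)" by (rule sym_rtrancl)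
  thus "(a, b) \<in> RR\<^sup>* \<Longrightarrow> (b, a) \<in> RR\<^sup>*" unfolding sym_def by blast
qed

lemma le_conn_aux:
  "\<forall>a b. a \<in> JL \<longrightarrow> b \<in> JL \<longrightarrow> (a::'a) \<le> b \<longrightarrow> card {c\<in>JL. a < c \<and> c < b} = n \<longrightarrow> (a, b) \<in> RR\<^sup>*"
proof (induction n rule: less_induct)
  case (less n)
  show ?case
  proof (intro allI impI)
    fix a b :: 'a
    assume ab: "a \<in> JL" "b \<in> JL" "a \<le> b" and n: "card {c\<in>JL. a < c \<and> c < b} = n"
    show "(a, b) \<in> RR\<^sup>*"
    proof (cases "a = b")
      case True then show ?thesis by simp
    next
      case False
      hence lt: "a < b" using ab by simp
      show ?thesis
      proof (cases "\<exists>c\<in>JL. a < c \<and> c < b")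
        case False
        hence "(b, a) \<in> hasseJ" unfolding hasseJ_def using ab lt by auto
        then show ?thesis by blast
      next
        case True
        then obtain c where c: "c \<in> JL" "a < c" "c < b" by blast
        have f: "finite {c\<in>JL. a < c \<and> c < b}" by simp
        have "card {d\<in>JL. a < d \<and> d < c} < n"
          unfolding n[symmetric]
          by (rule psubset_card_mono[OF f]) (use c in auto)
        hence 1: "(a, c) \<in> RR\<^sup>*" using less ab c by auto
        have "card {d\<in>JL. c < d \<and> d < b} < n"
          unfolding n[symmetric]
          by (rule psubset_card_mono[OF f]) (use c in auto)
        hence 2: "(c, b) \<in> RR\<^sup>*" using less ab c by auto
        from 1 2 show ?thesis by simp
      qed
    qed
  qed
qed

lemma le_conn: "(a::'a) \<in> JL \<Longrightarrow> b \<in> JL \<Longrightarrow> a \<le> b \<Longrightarrow> (a, b) \<in> RR\<^sup>*"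
  using le_conn_aux by blast

lemma compl_unique:
  assumes "inf (x::'a) u = bot" "sup x u = top" "inf x v = bot" "sup x v = top"
  shows "u = v"
proof -
  have "u = inf u (sup x v)" using assms by simp
  also have "\<dots> = sup (inf u x) (inf u v)" by (rule inf_sup_distrib1)
  also have "\<dots> = inf u v" using assms(1) by (simp add: inf_commute)
  finally have 1: "u = inf u v" .
  have "v = inf v (sup x u)" using assms by simp
  also have "\<dots> = sup (inf v x) (inf v u)" by (rule inf_sup_distrib1)
  also have "\<dots> = inf v u" using assms(3) by (simp add: inf_commute)
  finally have "v = inf u v" by (simp add: inf_commute)
  with 1 show ?thesis by simp
qed

lemma complement_of_eq:
  assumes "inf (x::'a) u = bot" "sup x u = top"
  shows "complement_of x = u"
  unfolding complement_of_def
  by (rule the_equality) (use assms compl_unique in blast)+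

end

theorem mainTheorem4:
  fixes L :: "'a::{finite, distrib_lattice, bounded_lattice} itself"
  shows "(Ltilde :: ('a \<times> 'a) set) = (\<Union>x\<in>cL. Lx x) \<longleftrightarrow>
    (\<forall>a\<in>(JL :: 'a set). \<exists>m\<in>componentJ a. \<forall>b\<in>componentJ a. m \<le> b)"
proof
  assume H: "(Ltilde :: ('a \<times> 'a) set) = (\<Union>x\<in>cL. Lx x)"
  show "\<forall>a\<in>(JL :: 'a set). \<exists>m\<in>componentJ a. \<forall>b\<in>componentJ a. m \<le> b"
  proof
    fix a :: 'a assume a: "a \<in> JL"
    have nb: "inf p q \<noteq> bot" if p: "p \<in> componentJ a" and q: "q \<in> componentJ a" for p q
    proof
      assume pq: "inf p q = bot"
      hence "(p,q) \<in> (Ltilde :: ('a\<times>'a) set)" unfolding Ltilde_def by simp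
      with H obtain x where x: "x \<in> cL" "(p,q) \<in> Lx x" by blast
      from x(1) obtain u where u: "inf x u = bot" "sup x u = top"
        unfolding cL_def complemented_def by blast
      have x': "complement_of x = u" by (rule complement_of_eq[OF u])
      have px: "p \<le> x" and qx: "q \<le> u" using x(2) x' unfolding Lx_def by auto
      have "(a,p) \<in> RR\<^sup>*" "(a,q) \<in> RR\<^sup>*" using p q unfolding componentJ_def by auto
      hence pq_conn: "(p,q) \<in> RR\<^sup>*" using RR_sym rtrancl_trans by metis
      have qJ: "q \<in> JL" using q unfolding componentJ_def by simp
      have step: "d \<le> x" if st: "(c,d) \<in> RR" "c \<le> x" for c d
      proof -
        from st(1) have cd: "c \<in> JL" "d \<in> JL" "c \<le> d \<or> d \<le> c" unfolding hasseJ_def by auto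
        show ?thesis
        proof (cases "d \<le> c")
          case True with st(2) show ?thesis by simp
        next
          case False
          hence cd2: "c \<le> d" using cd by simp
          have "d \<le> sup x u" using u by simp
          hence "d \<le> x \<or> d \<le> u" using JL_prime[OF cd(2)] by blast
          moreover have "\<not> d \<le> u"
          proof
            assume "d \<le> u"
            hence "c \<le> inf x u" using cd2 st(2) by (auto intro: order_trans)
            with u JL_nbot[OF cd(1)] show False by (simp add: bot_unique)
          qed
          ultimately show ?thesis by blast
        qed
      qed
      have "q \<le> x" using pq_conn px
        by (induction rule: rtrancl_induct) (auto intro: step)
      hence "q \<le> inf x u" using qx by simp
      with u JL_nbot[OF qJ] show False by (simp add: bot_unique)
    qed
    have aK: "a \<in> componentJ a" using a unfolding componentJ_def by simp
    have "finite (componentJ a)" by simp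
    from finite_has_minimal[OF this] aK obtain m where m: "m \<in> componentJ a"
      and mm: "\<And>b. b \<in> componentJ a \<Longrightarrow> b \<le> m \<Longrightarrow> m = b" by blast
    have "\<forall>b\<in>componentJ a. m \<le> b"
    proof
      fix b assume b: "b \<in> componentJ a"
      have "\<exists>c\<in>JL. c \<le> inf m b"
      proof (rule ccontr)
        assume nc: "\<not> (\<exists>c\<in>JL. c \<le> inf m b)"
        have "inf m b \<le> bot" using JL_below[of "inf m b" bot] nc by blast
        with nb[OF m b] show False by (simp add: bot_unique)
      qed
      then obtain c where c: "c \<in> JL" "c \<le> m" "c \<le> b" by auto
      have mJ: "m \<in> JL" and am: "(a,m) \<in> RR\<^sup>*" using m unfolding componentJ_def by auto
      have "(c,m) \<in> RR\<^sup>*" by (rule le_conn[OF c(1) mJ c(2)])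
      hence "(a,c) \<in> RR\<^sup>*" using am RR_sym[of c m] rtrancl_trans by metis
      hence "c \<in> componentJ a" using c unfolding componentJ_def by simp
      hence "m = c" using mm c by blast
      with c show "m \<le> b" by simp
    qed
    with m show "\<exists>m\<in>componentJ a. \<forall>b\<in>componentJ a. m \<le> b" by blast
  qed
next
  assume H: "\<forall>a\<in>(JL::'a set). \<exists>m\<in>componentJ a. \<forall>b\<in>componentJ a. m \<le> b"
  show "(Ltilde :: ('a \<times> 'a) set) = (\<Union>x\<in>cL. Lx x)"
  proof
    show "(\<Union>x\<in>cL. Lx x) \<subseteq> (Ltilde :: ('a \<times> 'a) set)" unfolding Lx_def by auto
  next
    show "(Ltilde :: ('a \<times> 'a) set) \<subseteq> (\<Union>x\<in>cL. Lx x)"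
    proof
      fix pr :: "'a \<times> 'a" assume "pr \<in> Ltilde"
      then obtain y z where pr: "pr = (y,z)" and yz: "inf y z = bot" unfolding Ltilde_def by auto
      define X where "X = {a\<in>JL. \<exists>d\<in>JL. d \<le> y \<and> (a,d) \<in> RR\<^sup>*}"
      define x where "x = jn X"
      define x' where "x' = jn (JL - X)"
      have top: "sup x x' = top"
      proof (rule top_unique[THEN iffD1], rule JL_below)
        fix a :: 'a assume a: "a \<in> JL"
        show "a \<le> sup x x'"
        proof (cases "a \<in> X")
          case True then show ?thesis unfolding x_def by (intro le_supI1 jn_ub)
        next
          case False then show ?thesis unfolding x'_def using a by (intro le_supI2 jn_ub) simp
        qed
      qed
      have bot: "inf x x' = bot"
      proof (rule bot_unique[THEN iffD1], rule JL_below)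
        fix a :: 'a assume a: "a \<in> JL" and ax: "a \<le> inf x x'"
        from ax have "a \<le> jn X" unfolding x_def by simp
        then obtain b where b: "b \<in> X" "a \<le> b" using JL_prime_jn[OF a] by blast
        from ax have "a \<le> jn (JL - X)" unfolding x'_def by simp
        then obtain c where c: "c \<in> JL - X" "a \<le> c" using JL_prime_jn[OF a] by blast
        from b obtain d where d: "d \<in> JL" "d \<le> y" "(b,d) \<in> RR\<^sup>*" and bJ: "b \<in> JL"
          unfolding X_def by blast
        have "(a,b) \<in> RR\<^sup>*" using le_conn a bJ b(2) by blast
        moreover have "(a,c) \<in> RR\<^sup>*" using le_conn a c by blast
        ultimately have "(c,d) \<in> RR\<^sup>*" using d(3) RR_sym[of a c] rtrancl_trans by metis
        hence "c \<in> X" using c d unfolding X_def by blast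
        with c show "a \<le> bot" by blast
      qed
      have yx: "y \<le> x"
      proof (rule JL_below)
        fix a :: 'a assume "a \<in> JL" "a \<le> y"
        hence "a \<in> X" unfolding X_def by blast
        thus "a \<le> x" unfolding x_def by (rule jn_ub)
      qed
      have zx: "z \<le> x'"
      proof (rule JL_below)
        fix a :: 'a assume a: "a \<in> JL" "a \<le> z"
        have "a \<notin> X"
        proof
          assume "a \<in> X"
          then obtain d where d: "d \<in> JL" "d \<le> y" "(a,d) \<in> RR\<^sup>*" unfolding X_def by blast
          from H a(1) obtain m where m: "m \<in> componentJ a" "\<forall>b\<in>componentJ a. m \<le> b" by blast
          have "a \<in> componentJ a" "d \<in> componentJ a" using a d unfolding componentJ_def by auto
          hence "m \<le> a" "m \<le> d" using m by auto
          hence "m \<le> inf y z" using a d by (auto intro: order_trans)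
          hence "m \<le> bot" using yz by simp
          moreover have mJ: "m \<in> JL" using m unfolding componentJ_def by simp
          ultimately show False using JL_nbot[OF mJ] by (simp add: bot_unique)
        qed
        thus "a \<le> x'" unfolding x'_def using a by (intro jn_ub) simp
      qed
      have "x \<in> cL" unfolding cL_def complemented_def using top bot by blast
      moreover have "complement_of x = x'" by (rule complement_of_eq[OF bot top])
      ultimately have "(y,z) \<in> Lx x" "x \<in> cL" unfolding Lx_def Ltilde_def using yz yx zx by auto
      thus "pr \<in> (\<Union>x\<in>cL. Lx x)" using pr by blast
    qed
  qed
qed

end
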